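(* Let $n^*_1,n^*_2\ge1$, $n^*=n^*_1+n^*_2$. Let $X_1,\dots,X_{n^*}$ be dependent nonnegative random variables sharing an Archimedean survival copula with generator $\psi_1$ ($\phi_1=\psi_1^{-1}$), with $X_i\sim F_1(\lambda_1x)$ for $i\le n^*_1$ and $X_j\sim F_2(\lambda_2x)$ for $j>n^*_1$; let $Y_1,\dots,Y_{n^*}$ be dependent nonnegative random variables sharing an Archimedean survival copula with generator $\psi_2$ ($\phi_2=\psi_2^{-1}$), with $Y_i\sim F_1(\mu_1x)$ for $i\le n^*_1$ and $Y_j\sim F_2(\mu_2x)$ for $j>n^*_1$ ($\lambda_k,\mu_k>0$). Let $X_{1:n^*}(n^*_1,n^*_2)=\min_iX_i$, $Y_{1:n^*}(n^*_1,n^*_2)=\min_iY_i$. Suppose $\phi_2\circ\psi_1$ is super-additive, $\psi_1$ or $\psi_2$ is log-convex, and $r_1$ or $r_2$ is increasing. Suppose further that either $r_1(x)\le r_2(x)$ for all $x>0$, $n^*_1\le n^*_2$ and $\boldsymbol\lambda=(\lambda_1,\lambda_2),\boldsymbol\mu=(\mu_1,\mu_2)\in\mathcal E_+$; or $r_1(x)\ge r_2(x)$ for all $x>0$, $n^*_1\ge n^*_2$ and $\boldsymbol\lambda,\boldsymbol\mu\in\mathcal D_+$. Then $$(\underbrace{\lambda_1,\dots,\lambda_1}_{n^*_1},\underbrace{\lambda_2,\dots,\lambda_2}_{n^*_2})\succeq_{w}(\underbrace{\mu_1,\dots,\mu_1}_{n^*_1},\underbrace{\mu_2,\dots,\mu_2}_{n^*_2})\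 \Longrightarrow\ X_{1:n^*}(n^*_1,n^*_2)\le_{st}Y_{1:n^*}(n^*_1,n^*_2).$$
   Context: $Z\sim F(\lambda x)$ means $Z$ has distribution function $x\mapsto F(\lambda x)$. Archimedean generator: a continuous nonincreasing $\psi:[0,\infty)\to[0,1]$ with $\psi(0)=1$, $\psi(\infty)=0$, which is $m$-monotone; $\phi=\psi^{-1}$. $Z_1,\dots,Z_m$ with marginal survival functions $\bar G_i=1-G_i$ share an Archimedean survival copula with generator $\psi$ if $P(Z_1>z_1,\dots,Z_m>z_m)=\psi(\sum_i\phi(\bar G_i(z_i)))$. $F_1,F_2$ are absolutely continuous distribution functions on $[0,\infty)$ with densities $f_1,f_2$ and hazard rates $r_k=f_k/(1-F_k)$. Super-additive: $g(x)+g(y)\le g(x+y)$. $\mathcal E_+=\{(x_1,x_2):0<x_1\le x_2\}$, $\mathcal D_+=\{(x_1,x_2):x_1\ge x_2>0\}$. For $\boldsymbol a,\boldsymbol b\in\mathbb R^k$ with increasingly ordered coordinates $a_{(1)}\le\dots\le a_{(k)}$: $\boldsymbol a\succeq_w\boldsymbol b$ means $\sum_{i=l}^ka_{(i)}\ge\sum_{i=l}^kb_{(i)}$ for all $l$. $U\le_{st}V$ means $P(U>x)\le P(V>x)$ for all $x$. Increasing/decreasing are in the weak sense. *)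

theory Defs
  imports "HOL-Probability.Probability"
begin

definition d_monotone :: "nat \<Rightarrow> (real \<Rightarrow> real) \<Rightarrow> bool" where
  "d_monotone d \<psi> \<longleftrightarrow>
     continuous_on {0..} \<psi> \<and>
     (\<forall>k. Suc k \<le> d - 2 \<longrightarrow> (\<forall>x>0. ((deriv ^^ k) \<psi> has_real_derivative (deriv ^^ Suc k) \<psi> x) (at x))) \<and>
     (\<forall>k\<le>d - 2. \<forall>x>0. 0 \<le> (-1) ^ k * (deriv ^^ k) \<psi> x) \<and>
     monotone_on {0<..} (\<le>) (\<ge>) (\<lambda>x. (-1) ^ (d - 2) * (deriv ^^ (d - 2)) \<psi> x) \<and>
     convex_on {0<..} (\<lambda>x. (-1) ^ (d - 2) * (deriv ^^ (d - 2)) \<psi> x)"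

definition arch_generator :: "nat \<Rightarrow> (real \<Rightarrow> real) \<Rightarrow> bool" where
  "arch_generator m \<psi> \<longleftrightarrow>
     continuous_on {0..} \<psi> \<and>
     monotone_on {0..} (\<le>) (\<ge>) \<psi> \<and>
     (\<forall>x\<ge>0. 0 \<le> \<psi> x \<and> \<psi> x \<le> 1) \<and>
     \<psi> 0 = 1 \<and> (\<psi> \<longlongrightarrow> 0) at_top \<and>
     d_monotone m \<psi>"

text \<open>The (generalised) inverse phi = psi^{-1}: phi(u) = inf{x >= 0. psi x <= u},
  extended-real valued (phi 0 = infinity when psi never vanishes).
  For u in (0,1] it is the usual inverse inf{x. psi x = u}.\<close>
definition gen_inv :: "(real \<Rightarrow> real) \<Rightarrow> real \<Rightarrow> ereal" where
  "gen_inv \<psi> u = Inf (ereal ` {x. 0 \<le> x \<and> \<psi> x \<le> u})"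

definition psi_ext :: "(real \<Rightarrow> real) \<Rightarrow> ereal \<Rightarrow> real" where
  "psi_ext \<psi> t = (if t = \<infinity> then 0 else \<psi> (real_of_ereal t))"

definition abs_cont_df :: "(real \<Rightarrow> real) \<Rightarrow> (real \<Rightarrow> real) \<Rightarrow> bool" where
  "abs_cont_df F f \<longleftrightarrow>
     (\<forall>x. 0 \<le> f x) \<and> f integrable_on {0..} \<and> integral {0..} f = 1 \<and>
     (\<forall>x<0. F x = 0) \<and> (\<forall>x\<ge>0. F x = integral {0..x} f)"

definition hazard :: "(real \<Rightarrow> real) \<Rightarrow> (real \<Rightarrow> real) \<Rightarrow> real \<Rightarrow> ereal" where
  "hazard F f x = (if F x < 1 then ereal (f x / (1 - F x)) else \<infinity>)"

definition superadditive_on :: "real set \<Rightarrow> (real \<Rightarrow> ereal) \<Rightarrow> bool" where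
  "superadditive_on S g \<longleftrightarrow> (\<forall>x\<in>S. \<forall>y\<in>S. g x + g y \<le> g (x + y))"

definition log_convex_on :: "real set \<Rightarrow> (real \<Rightarrow> real) \<Rightarrow> bool" where
  "log_convex_on S g \<longleftrightarrow> (\<forall>x\<in>S. 0 < g x) \<and> convex_on S (\<lambda>x. ln (g x))"

text \<open>Weak (sub)majorization a \<succeq>_w b: for every l, the sum of the largest
  k-l+1 entries of a dominates that of b (k = length).\<close>
definition weak_majorizes :: "real list \<Rightarrow> real list \<Rightarrow> bool" where
  "weak_majorizes a b \<longleftrightarrow> length a = length b \<and>
     (\<forall>l<length a. sum_list (drop l (sort b)) \<le> sum_list (drop l (sort a)))"

definition arch_survival_copula ::
  "'a measure \<Rightarrow> nat \<Rightarrow> (nat \<Rightarrow> 'a \<Rightarrow> real) \<Rightarrow> (nat \<Rightarrow> real \<Rightarrow> real) \<Rightarrow> (real \<Rightarrow> real) \<Rightarrow> bool" where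
  "arch_survival_copula M m Z Gbar \<psi> \<longleftrightarrow>
     (\<forall>z::nat \<Rightarrow> real. measure M {\<omega>\<in>space M. \<forall>i<m. Z i \<omega> > z i}
        = psi_ext \<psi> (\<Sum>i<m. gen_inv \<psi> (Gbar i (z i))))"

end

theory Submission
  imports Defs
begin

lemma agD:
  assumes "arch_generator m \<psi>"
  shows "continuous_on {0..} \<psi>" "\<And>x y. 0 \<le> x \<Longrightarrow> x \<le> y \<Longrightarrow> \<psi> y \<le> \<psi> x"
    "\<And>x. 0 \<le> x \<Longrightarrow> 0 \<le> \<psi> x" "\<And>x. 0 \<le> x \<Longrightarrow> \<psi> x \<le> 1" "\<psi> 0 = 1"
    "(\<psi> \<longlongrightarrow> 0) at_top"
  using assms unfolding arch_generator_def monotone_on_def by auto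

lemma gen_inv_nonneg: "0 \<le> gen_inv \<psi> u"
  unfolding gen_inv_def by (auto intro: Inf_greatest)

lemma gen_inv_anti: "u \<le> v \<Longrightarrow> gen_inv \<psi> v \<le> gen_inv \<psi> u"
  unfolding gen_inv_def by (rule Inf_superset_mono) auto

lemma gen_inv_empty: assumes "{x. 0 \<le> x \<and> \<psi> x \<le> u} = {}" shows "gen_inv \<psi> u = \<infinity>"
proof -
  have "gen_inv \<psi> u = Inf (ereal ` {})" by (simp only: gen_inv_def assms)
  then show ?thesis by (simp add: top_ereal_def)
qed

lemma gen_inv_fin:
  assumes ag: "arch_generator m \<psi>" and u: "u \<le> 1"
    and ne: "{x. 0 \<le> x \<and> \<psi> x \<le> u} \<noteq> {}"
  shows "\<exists>h\<ge>0. gen_inv \<psi> u = ereal h \<and> \<psi> h = u"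
proof -
  define S where "S = {x. 0 \<le> x \<and> \<psi> x \<le> u}"
  have cont: "continuous_on {0..} \<psi>" using agD[OF ag] by auto
  have "closed ({0..} \<inter> \<psi> -` {..u})"
    by (rule continuous_closed_preimage[OF cont]) auto
  moreover have "S = {0..} \<inter> \<psi> -` {..u}" unfolding S_def by auto
  ultimately have cl: "closed S" by simp
  have bdd: "bdd_below S" unfolding S_def by (auto intro: bdd_belowI[of _ 0])
  define h where "h = Inf S"
  have hS: "h \<in> S" unfolding h_def using closed_contains_Inf[OF ne[folded S_def] bdd cl] .
  have hle: "\<And>y. y \<in> S \<Longrightarrow> h \<le> y" unfolding h_def using bdd by (auto intro: cInf_lower)
  have h0: "0 \<le> h" "\<psi> h \<le> u" using hS unfolding S_def by auto
  have eq: "gen_inv \<psi> u = ereal h"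
    unfolding gen_inv_def S_def[symmetric]
  proof (rule antisym)
    show "Inf (ereal ` S) \<le> ereal h" using hS by (auto intro: Inf_lower)
    show "ereal h \<le> Inf (ereal ` S)" using hle by (auto intro: Inf_greatest)
  qed
  have "\<exists>x. 0 \<le> x \<and> x \<le> h \<and> \<psi> x = u"
    apply (rule IVT2')
    using h0 agD[OF ag] u continuous_on_subset[OF cont, of "{0..h}"] by auto
  then obtain x where x: "0 \<le> x" "x \<le> h" "\<psi> x = u" by blast
  then have "x \<in> S" unfolding S_def by auto
  then have "x = h" using hle x by force
  with x eq h0 show ?thesis by auto
qed

lemma gen_inv_pos_ne:
  assumes ag: "arch_generator m \<psi>" and u: "0 < u"
  shows "{x. 0 \<le> x \<and> \<psi> x \<le> u} \<noteq> {}"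
proof -
  have "eventually (\<lambda>x. \<psi> x < u) at_top"
    using agD(6)[OF ag] u by (rule order_tendstoD)
  then obtain N where "\<And>x. x \<ge> N \<Longrightarrow> \<psi> x < u" by (auto simp: eventually_at_top_linorder)
  then have "\<psi> (max N 0) < u" by simp
  then have "max N 0 \<in> {x. 0 \<le> x \<and> \<psi> x \<le> u}" by auto
  then show ?thesis by blast
qed

lemma psi_ext_nonneg: "arch_generator m \<psi> \<Longrightarrow> 0 \<le> t \<Longrightarrow> 0 \<le> psi_ext \<psi> t"
  unfolding psi_ext_def using agD(3)[of m \<psi>] by (auto simp: real_of_ereal_pos)

lemma psi_ext_anti:
  assumes ag: "arch_generator m \<psi>" and "0 \<le> s" "s \<le> t"
  shows "psi_ext \<psi> t \<le> psi_ext \<psi> s"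
proof (cases "t = \<infinity>")
  case True then show ?thesis using psi_ext_nonneg[OF ag, of s] assms by (simp add: psi_ext_def)
next
  case False
  then have "s \<noteq> \<infinity>" using assms by auto
  with False assms show ?thesis unfolding psi_ext_def
    using agD(2)[OF ag, of "real_of_ereal s" "real_of_ereal t"]
    by (cases s; cases t) auto
qed

lemma psi_ext_gen_inv:
  assumes ag: "arch_generator m \<psi>" and v: "0 \<le> v" "v \<le> 1"
  shows "psi_ext \<psi> (gen_inv \<psi> v) = v"
proof (cases "{x. 0 \<le> x \<and> \<psi> x \<le> v} = {}")
  case True
  then have "v = 0" using gen_inv_pos_ne[OF ag, of v] v by force
  then show ?thesis using True by (simp add: gen_inv_empty psi_ext_def)
next
  case False
  then obtain h where "h \<ge> 0" "gen_inv \<psi> v = ereal h" "\<psi> h = v" using gen_inv_fin[OF ag v(2)] by blast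
  then show ?thesis by (simp add: psi_ext_def)
qed


lemma superadd_sum:
  assumes sup: "superadditive_on {0..} g" and g0: "0 \<le> g 0"
    and fin: "finite I" and a: "\<And>i. i \<in> I \<Longrightarrow> 0 \<le> a i"
  shows "(\<Sum>i\<in>I. g (a i)) \<le> g (\<Sum>i\<in>I. a i)"
  using fin a
proof (induction I rule: finite_induct)
  case empty then show ?case using g0 by simp
next
  case (insert x F)
  have "(\<Sum>i\<in>insert x F. g (a i)) = g (a x) + (\<Sum>i\<in>F. g (a i))" using insert by simp
  also have "\<dots> \<le> g (a x) + g (\<Sum>i\<in>F. a i)" using insert by (intro add_left_mono) auto
  also have "\<dots> \<le> g (a x + (\<Sum>i\<in>F. a i))"
    using sup insert.prems unfolding superadditive_on_def by (simp add: sum_nonneg)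
  finally show ?case using insert by simp
qed

lemma SA:
  assumes ag1: "arch_generator m \<psi>1" and ag2: "arch_generator m \<psi>2"
    and sup: "superadditive_on {0..} (\<lambda>x. gen_inv \<psi>2 (\<psi>1 x))"
    and fin: "finite I" and u: "\<And>i. i \<in> I \<Longrightarrow> 0 \<le> u i \<and> u i \<le> 1"
  shows "psi_ext \<psi>1 (\<Sum>i\<in>I. gen_inv \<psi>1 (u i)) \<le> psi_ext \<psi>2 (\<Sum>i\<in>I. gen_inv \<psi>2 (u i))"
proof (cases "\<exists>i\<in>I. gen_inv \<psi>1 (u i) = \<infinity>")
  case True
  then have "(\<Sum>i\<in>I. gen_inv \<psi>1 (u i)) = \<infinity>" using fin by (simp add: sum_Pinfty)
  then show ?thesis using psi_ext_nonneg[OF ag2] by (simp add: psi_ext_def sum_nonneg gen_inv_nonneg)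
next
  case False
  define a where "a i = real_of_ereal (gen_inv \<psi>1 (u i))" for i
  have ai: "0 \<le> a i \<and> gen_inv \<psi>1 (u i) = ereal (a i) \<and> \<psi>1 (a i) = u i" if "i \<in> I" for i
  proof -
    have "{x. 0 \<le> x \<and> \<psi>1 x \<le> u i} \<noteq> {}"
    proof
      assume "{x. 0 \<le> x \<and> \<psi>1 x \<le> u i} = {}"
      then have "gen_inv \<psi>1 (u i) = \<infinity>" by (rule gen_inv_empty)
      with False that show False by auto
    qed
    moreover have "u i \<le> 1" using u that by auto
    ultimately obtain h where "h \<ge> 0" "gen_inv \<psi>1 (u i) = ereal h" "\<psi>1 h = u i"
      using gen_inv_fin[OF ag1] by blast
    then show ?thesis by (simp add: a_def)
  qed
  have suma: "(\<Sum>i\<in>I. gen_inv \<psi>1 (u i)) = ereal (\<Sum>i\<in>I. a i)"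
    using ai by (simp cong: sum.cong)
  have sa0: "0 \<le> (\<Sum>i\<in>I. a i)" using ai by (simp add: sum_nonneg)
  define g where "g x = gen_inv \<psi>2 (\<psi>1 x)" for x
  have "(\<Sum>i\<in>I. g (a i)) \<le> g (\<Sum>i\<in>I. a i)"
    by (rule superadd_sum) (use sup fin ai in \<open>auto simp: g_def gen_inv_nonneg\<close>)
  moreover have "(\<Sum>i\<in>I. g (a i)) = (\<Sum>i\<in>I. gen_inv \<psi>2 (u i))"
    using ai by (simp add: g_def cong: sum.cong)
  ultimately have le: "(\<Sum>i\<in>I. gen_inv \<psi>2 (u i)) \<le> g (\<Sum>i\<in>I. a i)" by simp
  have "psi_ext \<psi>2 (g (\<Sum>i\<in>I. a i)) \<le> psi_ext \<psi>2 (\<Sum>i\<in>I. gen_inv \<psi>2 (u i))"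
    by (rule psi_ext_anti[OF ag2 _ le]) (simp add: sum_nonneg gen_inv_nonneg)
  moreover have "psi_ext \<psi>2 (g (\<Sum>i\<in>I. a i)) = \<psi>1 (\<Sum>i\<in>I. a i)"
    unfolding g_def by (rule psi_ext_gen_inv[OF ag2]) (use agD[OF ag1] sa0 in auto)
  moreover have "psi_ext \<psi>1 (\<Sum>i\<in>I. gen_inv \<psi>1 (u i)) = \<psi>1 (\<Sum>i\<in>I. a i)"
    by (simp add: suma psi_ext_def)
  ultimately show ?thesis by simp
qed


lemma acdD:
  assumes "abs_cont_df F f"
  shows "\<And>x. 0 \<le> f x" "f integrable_on {0..}" "integral {0..} f = 1"
    "\<And>x. x < 0 \<Longrightarrow> F x = 0" "\<And>x. 0 \<le> x \<Longrightarrow> F x = integral {0..x} f"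
  using assms unfolding abs_cont_df_def by auto

lemma acd_int: "abs_cont_df F f \<Longrightarrow> 0 \<le> s \<Longrightarrow> f integrable_on {s..t}"
  by (rule integrable_on_subinterval[OF acdD(2)]) auto

lemma acd_le0: "abs_cont_df F f \<Longrightarrow> x \<le> 0 \<Longrightarrow> F x = 0"
  using acdD(4,5)[of F f x] by (cases "x = 0") auto

lemma acd_diff:
  assumes a: "abs_cont_df F f" and "0 \<le> s" "s \<le> t"
  shows "F t - F s = integral {s..t} f"
proof -
  have "integral {0..s} f + integral {s..t} f = integral {0..t} f"
    by (rule Henstock_Kurzweil_Integration.integral_combine) (use assms acd_int[OF a] in auto)
  then show ?thesis using acdD(5)[OF a] assms by auto
qed

lemma acd_nonneg: "abs_cont_df F f \<Longrightarrow> 0 \<le> F x"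
  using acdD[of F f] by (cases "x < 0") (auto intro!: integral_nonneg acd_int)

lemma acd_le1:
  assumes a: "abs_cont_df F f" shows "F x \<le> 1"
proof (cases "x < 0")
  case True then show ?thesis using acdD(4)[OF a] by simp
next
  case False
  have "integral {0..x} f \<le> integral {0..} f"
    by (rule integral_subset_le) (use acdD[OF a] acd_int[OF a] in auto)
  then show ?thesis using acdD[OF a] False by simp
qed

lemma acd_mono:
  assumes a: "abs_cont_df F f" and "s \<le> t" shows "F s \<le> F t"
proof (cases "s < 0")
  case True then show ?thesis using acdD(4)[OF a] acd_nonneg[OF a] by simp
next
  case False
  have "0 \<le> integral {s..t} f" by (rule integral_nonneg) (use acdD[OF a] acd_int[OF a] False in auto)
  then show ?thesis using acd_diff[OF a, of s t] False assms by simp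
qed

lemma acd_cont:
  assumes a: "abs_cont_df F f" and "0 \<le> a"
  shows "continuous_on {a..b} F"
proof -
  have "continuous_on {0..max a b} (\<lambda>x. integral {0..x} f)"
    by (rule indefinite_integral_continuous_1) (rule acd_int[OF a], simp)
  then have "continuous_on {a..b} (\<lambda>x. integral {0..x} f)"
    by (rule continuous_on_subset) (use assms in auto)
  then show ?thesis
    by (rule continuous_on_cong[THEN iffD1, rotated 2]) (use acdD(5)[OF a] assms in auto)
qed

lemma cmp:
  fixes P Q p q :: "real \<Rightarrow> real"
  assumes ab: "a \<le> b"
    and cP: "continuous_on {a..b} P" and cQ: "continuous_on {a..b} Q"
    and iP: "\<And>s t. a \<le> s \<Longrightarrow> s \<le> t \<Longrightarrow> t \<le> b \<Longrightarrow> P s - P t = integral {s..t} p \<and> p integrable_on {s..t}"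
    and iQ: "\<And>s t. a \<le> s \<Longrightarrow> s \<le> t \<Longrightarrow> t \<le> b \<Longrightarrow> Q s - Q t = integral {s..t} q \<and> q integrable_on {s..t}"
    and init: "Q a \<le> P a"
    and cond: "\<And>s. a < s \<Longrightarrow> s \<le> b \<Longrightarrow> P s < Q s \<Longrightarrow> p s \<le> q s"
  shows "Q b \<le> P b"
proof (rule ccontr)
  assume "\<not> Q b \<le> P b"
  then have Wb: "P b - Q b < 0" by simp
  define W where "W x = P x - Q x" for x
  have cW: "continuous_on {a..b} W" unfolding W_def using cP cQ by (intro continuous_intros)
  define S where "S = {a..b} \<inter> W -` {0..}"
  have "closed S" unfolding S_def by (rule continuous_closed_preimage[OF cW]) auto
  then have "compact ({a..b} \<inter> S)" by (intro compact_Int_closed) auto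
  moreover have "{a..b} \<inter> S = S" unfolding S_def by auto
  ultimately have "compact S" by simp
  moreover have "a \<in> S" using init ab unfolding S_def W_def by auto
  ultimately obtain s0 where s0: "s0 \<in> S" "\<And>y. y \<in> S \<Longrightarrow> y \<le> s0"
    using compact_attains_sup[of S] by blast
  have s0ab: "a \<le> s0" "s0 \<le> b" "0 \<le> W s0" using s0(1) unfolding S_def by auto
  have neg: "W y < 0" if "s0 < y" "y \<le> b" for y
  proof (rule ccontr)
    assume "\<not> W y < 0"
    then have "y \<in> S" using that s0ab unfolding S_def by auto
    then show False using s0(2) that by force
  qed
  have mono: "W y \<le> W b" if y: "s0 < y" "y \<le> b" for y
  proof -
    have "integral {y..b} p \<le> integral {y..b} q"
    proof (rule integral_le)
      show "p integrable_on {y..b}" "q integrable_on {y..b}" using iP iQ s0ab y by auto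
      fix z assume "z \<in> {y..b}"
      then show "p z \<le> q z" using cond[of z] neg[of z] s0ab y unfolding W_def by auto
    qed
    moreover have "P y - P b = integral {y..b} p" "Q y - Q b = integral {y..b} q"
      using iP iQ s0ab y by auto
    ultimately show ?thesis unfolding W_def by simp
  qed
  have "s0 < b" using s0ab Wb unfolding W_def by (cases "s0 = b") auto
  have "\<exists>x. s0 \<le> x \<and> x \<le> b \<and> W x = W b / 2"
    apply (rule IVT2')
    using Wb s0ab \<open>s0 < b\<close> continuous_on_subset[OF cW, of "{s0..b}"] unfolding W_def by auto
  then obtain x where x: "s0 \<le> x" "x \<le> b" "W x = W b / 2" by blast
  have "x \<noteq> s0" using x s0ab Wb unfolding W_def by auto
  then have "W x \<le> W b" using mono x by auto
  then show False using x Wb unfolding W_def by simp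
qed


lemma haz_fin: "F x < 1 \<Longrightarrow> hazard F f x = ereal (f x / (1 - F x))"
  by (simp add: hazard_def)

lemma haz_inf: "\<not> F x < 1 \<Longrightarrow> hazard F f x = \<infinity>"
  by (simp add: hazard_def)

lemma haz_le: "F x < 1 \<Longrightarrow> hazard F f x \<le> ereal c \<Longrightarrow> f x \<le> c * (1 - F x)"
  by (simp add: hazard_def pos_divide_le_eq)

lemma haz_ge: "F x < 1 \<Longrightarrow> ereal c \<le> hazard F f x \<Longrightarrow> c * (1 - F x) \<le> f x"
  by (simp add: hazard_def pos_le_divide_eq)

lemma exp_int:
  fixes K c s t :: real
  assumes "s \<le> t"
  shows "K * exp (- c * (s - a)) - K * exp (- c * (t - a)) = integral {s..t} (\<lambda>x. c * (K * exp (- c * (x - a))))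
    \<and> (\<lambda>x. c * (K * exp (- c * (x - a)))) integrable_on {s..t}"
proof -
  have "((\<lambda>x. c * (K * exp (- c * (x - a)))) has_integral
      ((\<lambda>x. - (K * exp (- c * (x - a)))) t - (\<lambda>x. - (K * exp (- c * (x - a)))) s)) {s..t}"
  proof (rule fundamental_theorem_of_calculus[OF assms])
    fix x assume "x \<in> {s..t}"
    show "((\<lambda>x. - (K * exp (- c * (x - a)))) has_vector_derivative c * (K * exp (- c * (x - a)))) (at x within {s..t})"
      unfolding has_real_derivative_iff_has_vector_derivative[symmetric]
      by (auto intro!: derivative_eq_intros simp: algebra_simps)
  qed
  then have H: "((\<lambda>x. c * (K * exp (- c * (x - a)))) has_integral
      (K * exp (- c * (s - a)) - K * exp (- c * (t - a)))) {s..t}" by simp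
  have "integral {s..t} (\<lambda>x. c * (K * exp (- c * (x - a)))) = K * exp (- c * (s - a)) - K * exp (- c * (t - a))"
    by (rule integral_unique[OF H])
  with has_integral_integrable[OF H] show ?thesis by simp
qed

lemma surv_lower:
  assumes acd: "abs_cont_df F f" and ab: "0 \<le> a" "a \<le> b" and c: "0 \<le> c"
    and h: "\<And>s. a < s \<Longrightarrow> s \<le> b \<Longrightarrow> F s < 1 \<and> hazard F f s \<le> ereal c"
  shows "(1 - F a) * exp (- c * (b - a)) \<le> 1 - F b"
proof -
  define Q where "Q x = (1 - F a) * exp (- c * (x - a))" for x
  have "Q b \<le> 1 - F b"
  proof (rule cmp[where p = f and q = "\<lambda>x. c * Q x", OF ab(2)])
    show "continuous_on {a..b} (\<lambda>x. 1 - F x)" using acd_cont[OF acd ab(1)] by (intro continuous_intros)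
    show "continuous_on {a..b} Q" unfolding Q_def by (intro continuous_intros)
    fix s t assume st: "a \<le> s" "s \<le> t" "t \<le> b"
    show "(1 - F s) - (1 - F t) = integral {s..t} f \<and> f integrable_on {s..t}"
      using acd_diff[OF acd, of s t] acd_int[OF acd, of s t] st ab by auto
    show "Q s - Q t = integral {s..t} (\<lambda>x. c * Q x) \<and> (\<lambda>x. c * Q x) integrable_on {s..t}"
      unfolding Q_def using exp_int[OF st(2)] by simp
  next
    show "Q a \<le> 1 - F a" unfolding Q_def by simp
  next
    fix s assume s: "a < s" "s \<le> b" "1 - F s < Q s"
    then have "f s \<le> c * (1 - F s)" using h[of s] haz_le by blast
    also have "\<dots> \<le> c * Q s" using s c by (intro mult_left_mono) auto
    finally show "f s \<le> c * Q s" .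
  qed
  then show ?thesis unfolding Q_def by simp
qed

lemma surv_upper:
  assumes acd: "abs_cont_df F f" and ab: "0 \<le> a" "a \<le> b" and c: "0 \<le> c"
    and h: "\<And>s. a < s \<Longrightarrow> s \<le> b \<Longrightarrow> F s < 1 \<Longrightarrow> ereal c \<le> hazard F f s"
  shows "1 - F b \<le> (1 - F a) * exp (- c * (b - a))"
proof -
  define Q where "Q x = (1 - F a) * exp (- c * (x - a))" for x
  have "1 - F b \<le> Q b"
  proof (rule cmp[where q = f and p = "\<lambda>x. c * Q x", OF ab(2)])
    show "continuous_on {a..b} (\<lambda>x. 1 - F x)" using acd_cont[OF acd ab(1)] by (intro continuous_intros)
    show "continuous_on {a..b} Q" unfolding Q_def by (intro continuous_intros)
    fix s t assume st: "a \<le> s" "s \<le> t" "t \<le> b"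
    show "(1 - F s) - (1 - F t) = integral {s..t} f \<and> f integrable_on {s..t}"
      using acd_diff[OF acd, of s t] acd_int[OF acd, of s t] st ab by auto
    show "Q s - Q t = integral {s..t} (\<lambda>x. c * Q x) \<and> (\<lambda>x. c * Q x) integrable_on {s..t}"
      unfolding Q_def using exp_int[OF st(2)] by simp
  next
    show "1 - F a \<le> Q a" unfolding Q_def by simp
  next
    fix s assume s: "a < s" "s \<le> b" "Q s < 1 - F s"
    have Q0: "0 \<le> Q s" unfolding Q_def using acd_le1[OF acd, of a] by simp
    then have "F s < 1" using s by simp
    have "c * Q s \<le> c * (1 - F s)" using s c by (intro mult_left_mono) auto
    also have "\<dots> \<le> f s" using h[of s] haz_ge s \<open>F s < 1\<close> by blast
    finally show "c * Q s \<le> f s" .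
  qed
  then show ?thesis unfolding Q_def by simp
qed

lemma surv_cmp:
  assumes a1: "abs_cont_df F1 f1" and a2: "abs_cont_df F2 f2"
    and h: "\<forall>x>0. hazard F1 f1 x \<le> hazard F2 f2 x" and t: "0 \<le> t"
  shows "1 - F2 t \<le> 1 - F1 t"
proof (rule cmp[where p = f1 and q = f2, OF t])
  show "continuous_on {0..t} (\<lambda>x. 1 - F1 x)" using acd_cont[OF a1, of 0] by (intro continuous_intros) auto
  show "continuous_on {0..t} (\<lambda>x. 1 - F2 x)" using acd_cont[OF a2, of 0] by (intro continuous_intros) auto
  fix s u assume st: "0 \<le> s" "s \<le> u" "u \<le> t"
  show "(1 - F1 s) - (1 - F1 u) = integral {s..u} f1 \<and> f1 integrable_on {s..u}"
    using acd_diff[OF a1, of s u] acd_int[OF a1, of s u] st by auto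
  show "(1 - F2 s) - (1 - F2 u) = integral {s..u} f2 \<and> f2 integrable_on {s..u}"
    using acd_diff[OF a2, of s u] acd_int[OF a2, of s u] st by auto
next
  show "1 - F2 0 \<le> 1 - F1 0" using acd_le0[OF a1, of 0] acd_le0[OF a2, of 0] by simp
next
  fix s assume s: "0 < s" "s \<le> t" "1 - F1 s < 1 - F2 s"
  have F2s: "F2 s < 1" using s acd_le1[OF a1, of s] by simp
  have hs: "hazard F1 f1 s \<le> ereal (f2 s / (1 - F2 s))" using h s haz_fin[of F2 s f2, OF F2s] by metis
  have F1s: "F1 s < 1"
  proof (rule ccontr)
    assume "\<not> F1 s < 1" then show False using hs haz_inf[of F1 s f1] by simp
  qed
  have "f1 s \<le> (f2 s / (1 - F2 s)) * (1 - F1 s)" using haz_le[OF F1s hs] by (simp add: mult.commute)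
  also have "\<dots> \<le> (f2 s / (1 - F2 s)) * (1 - F2 s)"
    using s F2s acdD(1)[OF a2, of s] by (intro mult_left_mono) auto
  also have "\<dots> = f2 s" using F2s by simp
  finally show "f1 s \<le> f2 s" .
qed


lemma LC_real:
  fixes C :: "real \<Rightarrow> real" and np nq :: real
  assumes cvx: "convex_on {0..} C"
    and ord: "0 \<le> p1" "p1 \<le> q1" "q1 \<le> p2" "p2 \<le> q2"
    and D1: "0 < C p1 - C q1"
    and n: "0 < np" "0 < nq"
    and key: "np * (C p1 - C q1) \<le> nq * (C p2 - C q2)"
  shows "np * (q1 - p1) \<le> nq * (q2 - p2)"
proof -
  have pq1: "p1 < q1" using D1 ord by (cases "p1 = q1") auto
  have "0 < np * (C p1 - C q1)" using n D1 by simp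
  then have "0 < nq * (C p2 - C q2)" using key by linarith
  then have D2: "0 < C p2 - C q2" using n by (simp add: zero_less_mult_iff)
  have pq2: "p2 < q2" using D2 ord by (cases "p2 = q2") auto
  have s1: "(C p1 - C q1) / (p1 - q1) \<le> (C p1 - C q2) / (p1 - q2)"
    by (rule convex_on_slope_le(1)[OF cvx]) (use ord pq1 pq2 in auto)
  have s2: "(C p1 - C q2) / (p1 - q2) \<le> (C p2 - C q2) / (p2 - q2)"
    by (rule convex_on_slope_le(2)[OF cvx]) (use ord pq1 pq2 in auto)
  define w1 where "w1 = q1 - p1"
  define w2 where "w2 = q2 - p2"
  define d1 where "d1 = C p1 - C q1"
  define d2 where "d2 = C p2 - C q2"
  have w: "0 < w1" "0 < w2" using pq1 pq2 by (auto simp: w1_def w2_def)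
  have "(C p1 - C q1) / (p1 - q1) = - (d1 / w1)" by (simp add: d1_def w1_def divide_simps) (simp add: algebra_simps)
  moreover have "(C p2 - C q2) / (p2 - q2) = - (d2 / w2)" by (simp add: d2_def w2_def divide_simps) (simp add: algebra_simps)
  ultimately have "d2 / w2 \<le> d1 / w1" using s1 s2 by linarith
  then have sl: "d2 * w1 \<le> d1 * w2" using w by (simp add: divide_simps)
  have "np * w1 * d2 \<le> np * (d1 * w2)" using sl n by (simp add: mult.assoc mult_left_mono mult.commute)
  also have "\<dots> = (np * d1) * w2" by simp
  also have "\<dots> \<le> (nq * d2) * w2" using key w by (intro mult_right_mono) (auto simp: d1_def d2_def)
  finally have "np * w1 * d2 \<le> nq * w2 * d2" by (simp add: algebra_simps)
  then have "np * w1 \<le> nq * w2" using D2 by (simp add: d2_def)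
  then show ?thesis by (simp add: w1_def w2_def)
qed

lemma sum_split:
  fixes g :: "'x \<Rightarrow> 'b::comm_monoid_add" and n1 n2 :: nat
  shows "(\<Sum>i<n1+n2. g (if i < n1 then u else v)) = (\<Sum>i<n1. g u) + (\<Sum>i<n2. g v)"
proof (induction n2)
  case 0 then show ?case by simp
next
  case (Suc n2)
  then show ?case by (simp add: add.assoc)
qed

lemma sum_const_ereal: "(\<Sum>i<k. ereal h) = ereal (real k * h)"
  by simp

lemma core:
  fixes Fp fp Fq fq \<psi> :: "real \<Rightarrow> real" and ap aq bp bq :: real and np nq :: nat
  assumes acp: "abs_cont_df Fp fp" and acq: "abs_cont_df Fq fq"
    and haz: "\<forall>x>0. hazard Fp fp x \<le> hazard Fq fq x"
    and incr: "mono_on {0<..} (hazard Fp fp) \<or> mono_on {0<..} (hazard Fq fq)"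
    and pos: "0 < ap" "0 < bp" "bp \<le> bq" "bq \<le> aq" "1 \<le> np" "1 \<le> nq"
    and maj: "real np * bp + real nq * bq \<le> real np * ap + real nq * aq"
    and ag: "arch_generator m \<psi>" and lc: "log_convex_on {0..} \<psi>"
  shows "(\<Sum>i<np+nq. gen_inv \<psi> (if i < np then 1 - Fp bp else 1 - Fq bq))
       \<le> (\<Sum>i<np+nq. gen_inv \<psi> (if i < np then 1 - Fp ap else 1 - Fq aq))"
proof -
  define Ap where "Ap = 1 - Fp ap"
  define Aq where "Aq = 1 - Fq aq"
  define Bp where "Bp = 1 - Fp bp"
  define Bq where "Bq = 1 - Fq bq"
  have AqBq: "Aq \<le> Bq" unfolding Aq_def Bq_def using acd_mono[OF acq pos(4)] by simp
  have "(\<Sum>i<np. gen_inv \<psi> Bp) + (\<Sum>i<nq. gen_inv \<psi> Bq) \<le> (\<Sum>i<np. gen_inv \<psi> Ap) + (\<Sum>i<nq. gen_inv \<psi> Aq)"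
  proof (cases "Ap \<le> Bp")
    case True
    show ?thesis using True AqBq by (intro add_mono sum_mono gen_inv_anti) auto
  next
    case False
    then have BpAp: "Bp < Ap" by simp
    have apbp: "ap < bp"
    proof (rule ccontr)
      assume "\<not> ap < bp"
      then have "Fp bp \<le> Fp ap" using acd_mono[OF acp] by simp
      then show False using BpAp unfolding Ap_def Bp_def by simp
    qed
    have psipos: "\<And>x. 0 \<le> x \<Longrightarrow> 0 < \<psi> x" using lc unfolding log_convex_on_def by auto
    show ?thesis
    proof (cases "Aq \<le> 0")
      case True
      have "{x. 0 \<le> x \<and> \<psi> x \<le> Aq} = {}" using True psipos by force
      then have inf: "gen_inv \<psi> Aq = \<infinity>" by (rule gen_inv_empty)
      have "(\<Sum>i<nq. gen_inv \<psi> Aq) = \<infinity>" using pos(6) by (simp add: inf sum_Pinfty) (rule exI[of _ 0], simp)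
      moreover have "0 \<le> (\<Sum>i<np. gen_inv \<psi> Ap)" by (simp add: sum_nonneg gen_inv_nonneg)
      ultimately have "(\<Sum>i<np. gen_inv \<psi> Ap) + (\<Sum>i<nq. gen_inv \<psi> Aq) = \<infinity>" by simp
      then show ?thesis by (metis ereal_less_eq(1))
    next
      case False
      then have Aq0: "0 < Aq" by simp
      have Fqlt: "Fq s < 1" if "s \<le> aq" for s
        using acd_mono[OF acq that] Aq0 unfolding Aq_def by simp
      obtain c where c0: "0 \<le> c"
        and hp: "\<And>s. 0 < s \<Longrightarrow> s \<le> bp \<Longrightarrow> hazard Fp fp s \<le> ereal c"
        and hq: "\<And>s. bq \<le> s \<Longrightarrow> ereal c \<le> hazard Fq fq s"
      proof (cases "mono_on {0<..} (hazard Fp fp)")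
        case True
        have "hazard Fp fp bp \<le> hazard Fq fq bp" using haz pos by auto
        also have "\<dots> = ereal (fq bp / (1 - Fq bp))" using Fqlt[of bp] pos by (simp add: haz_fin)
        finally have hb: "hazard Fp fp bp \<le> ereal (fq bp / (1 - Fq bp))" .
        have Fpb: "Fp bp < 1"
        proof (rule ccontr)
          assume "\<not> Fp bp < 1" then show False using hb haz_inf[of Fp bp fp] by simp
        qed
        define c where "c = fp bp / (1 - Fp bp)"
        have hc: "hazard Fp fp bp = ereal c" using Fpb by (simp add: haz_fin c_def)
        show ?thesis
        proof (rule that[of c])
          show "0 \<le> c" unfolding c_def using Fpb acdD(1)[OF acp, of bp] by simp
          fix s
          show "0 < s \<Longrightarrow> s \<le> bp \<Longrightarrow> hazard Fp fp s \<le> ereal c"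
            using True pos hc by (auto dest: mono_onD[of _ _ s bp])
          assume s: "bq \<le> s"
          have "ereal c \<le> hazard Fp fp s" using True pos hc s by (auto dest: mono_onD[of _ _ bp s])
          also have "\<dots> \<le> hazard Fq fq s" using haz pos s by auto
          finally show "ereal c \<le> hazard Fq fq s" .
        qed
      next
        case False
        then have mq: "mono_on {0<..} (hazard Fq fq)" using incr by simp
        have Fqb: "Fq bq < 1" using Fqlt pos by simp
        define c where "c = fq bq / (1 - Fq bq)"
        have hc: "hazard Fq fq bq = ereal c" using Fqb by (simp add: haz_fin c_def)
        show ?thesis
        proof (rule that[of c])
          show "0 \<le> c" unfolding c_def using Fqb acdD(1)[OF acq, of bq] by simp
          fix s
          show "bq \<le> s \<Longrightarrow> ereal c \<le> hazard Fq fq s"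
            using mq pos hc by (auto dest: mono_onD[of _ _ bq s])
          assume s: "0 < s" "s \<le> bp"
          have "hazard Fp fp s \<le> hazard Fq fq s" using haz s by auto
          also have "\<dots> \<le> ereal c" using mq pos hc s by (auto dest: mono_onD[of _ _ s bq])
          finally show "hazard Fp fp s \<le> ereal c" .
        qed
      qed
      have Fplt: "Fp s < 1" if "0 < s" "s \<le> bp" for s
      proof (rule ccontr)
        assume "\<not> Fp s < 1" then show False using hp[OF that] haz_inf[of Fp s fp] by simp
      qed
      have lower: "Ap * exp (- c * (bp - ap)) \<le> Bp" unfolding Ap_def Bp_def
        by (rule surv_lower[OF acp _ _ c0]) (use pos apbp hp Fplt in auto)
      have upper: "Aq \<le> Bq * exp (- c * (aq - bq))" unfolding Aq_def Bq_def
        by (rule surv_upper[OF acq _ _ c0]) (use pos hq in auto)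
      have "1 - Fq bp \<le> 1 - Fp bp" by (rule surv_cmp[OF acp acq haz]) (use pos in auto)
      moreover have "Fq bp \<le> Fq bq" using acd_mono[OF acq pos(3)] .
      ultimately have BqBp: "Bq \<le> Bp" unfolding Bq_def Bp_def by simp
      have Bq0: "0 < Bq" using Aq0 AqBq by simp
      have Bp0: "0 < Bp" using Bq0 BqBp by simp
      have Ap0: "0 < Ap" using Bp0 BpAp by simp
      have le1: "Ap \<le> 1" "Aq \<le> 1" "Bp \<le> 1" "Bq \<le> 1"
        unfolding Ap_def Aq_def Bp_def Bq_def using acd_nonneg[OF acp] acd_nonneg[OF acq] by auto
      have l1: "ln Ap - ln Bp \<le> c * (bp - ap)"
      proof -
        have "ln (Ap * exp (- c * (bp - ap))) \<le> ln Bp" using lower Ap0 Bp0 by simp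
        then show ?thesis using Ap0 by (simp add: ln_mult)
      qed
      have l2: "c * (aq - bq) \<le> ln Bq - ln Aq"
      proof -
        have "ln Aq \<le> ln (Bq * exp (- c * (aq - bq)))" using upper Aq0 Bq0 by simp
        then show ?thesis using Bq0 by (simp add: ln_mult)
      qed
      have m: "real np * (bp - ap) \<le> real nq * (aq - bq)" using maj by (simp add: algebra_simps)
      have keyl: "real np * (ln Ap - ln Bp) \<le> real nq * (ln Bq - ln Aq)"
      proof -
        have "real np * (ln Ap - ln Bp) \<le> real np * (c * (bp - ap))" using l1 by (intro mult_left_mono) auto
        also have "\<dots> = c * (real np * (bp - ap))" by simp
        also have "\<dots> \<le> c * (real nq * (aq - bq))" using m c0 by (intro mult_left_mono) auto
        also have "\<dots> = real nq * (c * (aq - bq))" by simp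
        also have "\<dots> \<le> real nq * (ln Bq - ln Aq)" using l2 by (intro mult_left_mono) auto
        finally show ?thesis .
      qed
      have fin: "\<exists>h\<ge>0. gen_inv \<psi> u = ereal h \<and> \<psi> h = u" if "0 < u" "u \<le> 1" for u
        using gen_inv_fin[OF ag that(2) gen_inv_pos_ne[OF ag that(1)]] .
      obtain hAp where hAp: "hAp \<ge> 0" "gen_inv \<psi> Ap = ereal hAp" "\<psi> hAp = Ap" using fin Ap0 le1 by blast
      obtain hAq where hAq: "hAq \<ge> 0" "gen_inv \<psi> Aq = ereal hAq" "\<psi> hAq = Aq" using fin Aq0 le1 by blast
      obtain hBp where hBp: "hBp \<ge> 0" "gen_inv \<psi> Bp = ereal hBp" "\<psi> hBp = Bp" using fin Bp0 le1 by blast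
      obtain hBq where hBq: "hBq \<ge> 0" "gen_inv \<psi> Bq = ereal hBq" "\<psi> hBq = Bq" using fin Bq0 le1 by blast
      have o1: "hAp \<le> hBp" using gen_inv_anti[of Bp Ap \<psi>] BpAp hAp hBp by simp
      have o2: "hBp \<le> hBq" using gen_inv_anti[of Bq Bp \<psi>] BqBp hBq hBp by simp
      have o3: "hBq \<le> hAq" using gen_inv_anti[of Aq Bq \<psi>] AqBq hBq hAq by simp
      have cvx: "convex_on {0..} (\<lambda>x. ln (\<psi> x))" using lc unfolding log_convex_on_def by auto
      have "real np * (hBp - hAp) \<le> real nq * (hAq - hBq)"
        by (rule LC_real[OF cvx]) (use hAp hBp hAq hBq o1 o2 o3 BpAp Bp0 pos keyl in auto)
      then show ?thesis using hAp hBp hAq hBq by (simp add: algebra_simps)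
    qed
  qed
  then show ?thesis unfolding Ap_def Aq_def Bp_def Bq_def by (simp only: sum_split)
qed


lemma wm_extract:
  fixes a b c d :: real and n1 n2 :: nat
  assumes ab: "a \<le> b" and cd: "c \<le> d" and n2: "1 \<le> n2"
    and wm: "weak_majorizes (replicate n1 a @ replicate n2 b) (replicate n1 c @ replicate n2 d)"
  shows "d \<le> b \<and> real n1 * c + real n2 * d \<le> real n1 * a + real n2 * b"
proof -
  have s1: "sort (replicate n1 a @ replicate n2 b) = replicate n1 a @ replicate n2 b"
    by (rule sorted_sort_id) (use ab in \<open>auto simp: sorted_append\<close>)
  have s2: "sort (replicate n1 c @ replicate n2 d) = replicate n1 c @ replicate n2 d"
    by (rule sorted_sort_id) (use cd in \<open>auto simp: sorted_append\<close>)
  have H: "\<And>l. l < n1 + n2 \<Longrightarrow> sum_list (drop l (replicate n1 c @ replicate n2 d))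
      \<le> sum_list (drop l (replicate n1 a @ replicate n2 b))"
    using wm unfolding weak_majorizes_def s1 s2 by simp
  have "sum_list (drop 0 (replicate n1 c @ replicate n2 d)) \<le> sum_list (drop 0 (replicate n1 a @ replicate n2 b))"
    using H[of 0] n2 by simp
  then have t: "real n1 * c + real n2 * d \<le> real n1 * a + real n2 * b" by (simp add: sum_list_replicate)
  have "sum_list (drop n1 (replicate n1 c @ replicate n2 d)) \<le> sum_list (drop n1 (replicate n1 a @ replicate n2 b))"
    using H[of n1] n2 by simp
  then have "real n2 * d \<le> real n2 * b" by (simp add: sum_list_replicate)
  then have "d \<le> b" using n2 by simp
  with t show ?thesis by simp
qed

lemma sort_swap: "sort (ys @ xs) = sort (xs @ (ys :: real list))"
  by (rule properties_for_sort) (auto simp: add.commute)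

lemma wm_swap:
  assumes "weak_majorizes (xs @ ys) (us @ vs)"
  shows "weak_majorizes (ys @ xs) (vs @ us)"
  using assms unfolding weak_majorizes_def by (simp add: sort_swap)

lemma sum_swap:
  fixes g :: "'x \<Rightarrow> 'b::comm_monoid_add" and n1 n2 :: nat
  shows "(\<Sum>i<n2+n1. g (if i < n2 then v else u)) = (\<Sum>i<n1+n2. g (if i < n1 then u else v))"
proof -
  have a: "(\<Sum>i<n2+n1. g (if i < n2 then v else u)) = (\<Sum>i<n2. g v) + (\<Sum>i<n1. g u)" by (rule sum_split)
  have b: "(\<Sum>i<n1+n2. g (if i < n1 then u else v)) = (\<Sum>i<n1. g u) + (\<Sum>i<n2. g v)" by (rule sum_split)
  show ?thesis unfolding a b by (simp add: add.commute)
qed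


theorem theorem3p8:
  fixes M :: "'a measure" and N :: "'b measure"
    and X :: "nat \<Rightarrow> 'a \<Rightarrow> real" and Y :: "nat \<Rightarrow> 'b \<Rightarrow> real"
    and n1 n2 :: nat
    and F1 F2 f1 f2 \<psi>1 \<psi>2 :: "real \<Rightarrow> real"
    and la1 la2 mu1 mu2 :: real
  defines "n \<equiv> n1 + n2"
  assumes n1: "1 \<le> n1" and n2: "1 \<le> n2"
    and pos: "0 < la1" "0 < la2" "0 < mu1" "0 < mu2"
    and F1: "abs_cont_df F1 f1" and F2: "abs_cont_df F2 f2"
    and M: "prob_space M" and N: "prob_space N"
    and Xmeas: "\<And>i. i < n \<Longrightarrow> X i \<in> borel_measurable M"
    and Ymeas: "\<And>i. i < n \<Longrightarrow> Y i \<in> borel_measurable N"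
    and Xnn: "\<And>i \<omega>. i < n \<Longrightarrow> \<omega> \<in> space M \<Longrightarrow> 0 \<le> X i \<omega>"
    and Ynn: "\<And>i \<omega>. i < n \<Longrightarrow> \<omega> \<in> space N \<Longrightarrow> 0 \<le> Y i \<omega>"
    and Xmarg: "\<And>i x. i < n \<Longrightarrow>
        measure M {\<omega>\<in>space M. X i \<omega> \<le> x} = (if i < n1 then F1 (la1 * x) else F2 (la2 * x))"
    and Ymarg: "\<And>i x. i < n \<Longrightarrow>
        measure N {\<omega>\<in>space N. Y i \<omega> \<le> x} = (if i < n1 then F1 (mu1 * x) else F2 (mu2 * x))"
    and gen1: "arch_generator n \<psi>1" and gen2: "arch_generator n \<psi>2"
    and Xcop: "arch_survival_copula M n X
        (\<lambda>i x. 1 - (if i < n1 then F1 (la1 * x) else F2 (la2 * x))) \<psi>1"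
    and Ycop: "arch_survival_copula N n Y
        (\<lambda>i x. 1 - (if i < n1 then F1 (mu1 * x) else F2 (mu2 * x))) \<psi>2"
    and sup: "superadditive_on {0..} (\<lambda>x. gen_inv \<psi>2 (\<psi>1 x))"
    and logc: "log_convex_on {0..} \<psi>1 \<or> log_convex_on {0..} \<psi>2"
    and ifr: "mono_on {0<..} (hazard F1 f1) \<or> mono_on {0<..} (hazard F2 f2)"
    and cases:
      "((\<forall>x>0. hazard F1 f1 x \<le> hazard F2 f2 x) \<and> n1 \<le> n2 \<and> la1 \<le> la2 \<and> mu1 \<le> mu2) \<or>
       ((\<forall>x>0. hazard F1 f1 x \<ge> hazard F2 f2 x) \<and> n1 \<ge> n2 \<and> la1 \<ge> la2 \<and> mu1 \<ge> mu2)"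
    and maj: "weak_majorizes (replicate n1 la1 @ replicate n2 la2) (replicate n1 mu1 @ replicate n2 mu2)"
  shows "\<forall>x. measure M {\<omega>\<in>space M. Min ((\<lambda>i. X i \<omega>) ` {..<n}) > x}
           \<le> measure N {\<omega>\<in>space N. Min ((\<lambda>i. Y i \<omega>) ` {..<n}) > x}"
proof (intro allI)
  fix x :: real
  have nge: "1 \<le> n" using n1 n2 unfolding n_def by simp
  define A1 where "A1 = 1 - F1 (la1 * x)"
  define A2 where "A2 = 1 - F2 (la2 * x)"
  define B1 where "B1 = 1 - F1 (mu1 * x)"
  define B2 where "B2 = 1 - F2 (mu2 * x)"
  define U where "U i = (if i < n1 then A1 else A2)" for i :: nat
  define V where "V i = (if i < n1 then B1 else B2)" for i :: nat
  have rng: "0 \<le> U i \<and> U i \<le> 1" "0 \<le> V i \<and> V i \<le> 1" for i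
    unfolding U_def V_def A1_def A2_def B1_def B2_def
    using acd_nonneg[OF F1] acd_nonneg[OF F2] acd_le1[OF F1] acd_le1[OF F2] by auto
  have "0 \<in> {..<n}" using nge by simp
  then have fin: "finite {..<n}" "{..<n} \<noteq> {}" by auto
  have setX: "{\<omega>\<in>space M. Min ((\<lambda>i. X i \<omega>) ` {..<n}) > x} = {\<omega>\<in>space M. \<forall>i<n. X i \<omega> > x}"
    using fin by (auto simp: Min_gr_iff)
  have setY: "{\<omega>\<in>space N. Min ((\<lambda>i. Y i \<omega>) ` {..<n}) > x} = {\<omega>\<in>space N. \<forall>i<n. Y i \<omega> > x}"
    using fin by (auto simp: Min_gr_iff)
  have eqU: "(1 - (if i < n1 then F1 (la1 * x) else F2 (la2 * x))) = U i" for i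
    unfolding U_def A1_def A2_def by simp
  have eqV: "(1 - (if i < n1 then F1 (mu1 * x) else F2 (mu2 * x))) = V i" for i
    unfolding V_def B1_def B2_def by simp
  have SX: "measure M {\<omega>\<in>space M. Min ((\<lambda>i. X i \<omega>) ` {..<n}) > x} = psi_ext \<psi>1 (\<Sum>i<n. gen_inv \<psi>1 (U i))"
    using Xcop unfolding arch_survival_copula_def setX
    by (auto dest: spec[of _ "\<lambda>_. x"] simp: eqU)
  have SY: "measure N {\<omega>\<in>space N. Min ((\<lambda>i. Y i \<omega>) ` {..<n}) > x} = psi_ext \<psi>2 (\<Sum>i<n. gen_inv \<psi>2 (V i))"
    using Ycop unfolding arch_survival_copula_def setY
    by (auto dest: spec[of _ "\<lambda>_. x"] simp: eqV)
  have KEY: "(\<Sum>i<n. gen_inv \<psi> (V i)) \<le> (\<Sum>i<n. gen_inv \<psi> (U i))"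
    if ag: "arch_generator n \<psi>" and lc: "log_convex_on {0..} \<psi>" for \<psi>
  proof (cases "x \<le> 0")
    case True
    have "A1 = B1" "A2 = B2" unfolding A1_def B1_def A2_def B2_def
      using acd_le0[OF F1, of "la1 * x"] acd_le0[OF F1, of "mu1 * x"]
        acd_le0[OF F2, of "la2 * x"] acd_le0[OF F2, of "mu2 * x"] True pos
      by (auto simp: mult_nonneg_nonpos)
    then have "U = V" unfolding U_def V_def by auto
    then show ?thesis by simp
  next
    case False
    then have x0: "0 < x" by simp
    have sU: "(\<Sum>i<n. gen_inv \<psi> (U i)) = (\<Sum>i<n1+n2. gen_inv \<psi> (if i < n1 then 1 - F1 (la1 * x) else 1 - F2 (la2 * x)))"
      unfolding n_def U_def A1_def A2_def by (simp add: if_distrib)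
    have sV: "(\<Sum>i<n. gen_inv \<psi> (V i)) = (\<Sum>i<n1+n2. gen_inv \<psi> (if i < n1 then 1 - F1 (mu1 * x) else 1 - F2 (mu2 * x)))"
      unfolding n_def V_def B1_def B2_def by (simp add: if_distrib)
    show ?thesis
      using cases
    proof (elim disjE conjE)
      assume h12: "\<forall>x>0. hazard F1 f1 x \<le> hazard F2 f2 x" and "n1 \<le> n2" and l: "la1 \<le> la2" and m: "mu1 \<le> mu2"
      have w: "mu2 \<le> la2 \<and> real n1 * mu1 + real n2 * mu2 \<le> real n1 * la1 + real n2 * la2"
        by (rule wm_extract[OF l m n2 maj])
      have maj': "real n1 * (mu1 * x) + real n2 * (mu2 * x) \<le> real n1 * (la1 * x) + real n2 * (la2 * x)"
        using mult_right_mono[OF conjunct2[OF w], of x] x0 by (simp add: algebra_simps)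
      show ?thesis unfolding sU sV
        by (rule core[OF F1 F2 h12 ifr _ _ _ _ n1 n2 maj' ag lc])
           (use x0 pos m w in \<open>auto intro: mult_right_mono\<close>)
    next
      assume h21: "\<forall>x>0. hazard F2 f2 x \<le> hazard F1 f1 x" and "n2 \<le> n1" and l: "la2 \<le> la1" and m: "mu2 \<le> mu1"
      have maj2: "weak_majorizes (replicate n2 la2 @ replicate n1 la1) (replicate n2 mu2 @ replicate n1 mu1)"
        by (rule wm_swap[OF maj])
      have w: "mu1 \<le> la1 \<and> real n2 * mu2 + real n1 * mu1 \<le> real n2 * la2 + real n1 * la1"
        by (rule wm_extract[OF l m n1 maj2])
      have maj': "real n2 * (mu2 * x) + real n1 * (mu1 * x) \<le> real n2 * (la2 * x) + real n1 * (la1 * x)"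
        using mult_right_mono[OF conjunct2[OF w], of x] x0 by (simp add: algebra_simps)
      have ifr': "mono_on {0<..} (hazard F2 f2) \<or> mono_on {0<..} (hazard F1 f1)" using ifr by blast
      have "(\<Sum>i<n2+n1. gen_inv \<psi> (if i < n2 then 1 - F2 (mu2 * x) else 1 - F1 (mu1 * x)))
          \<le> (\<Sum>i<n2+n1. gen_inv \<psi> (if i < n2 then 1 - F2 (la2 * x) else 1 - F1 (la1 * x)))"
        by (rule core[OF F2 F1 h21 ifr' _ _ _ _ n2 n1 maj' ag lc])
           (use x0 pos m w in \<open>auto intro: mult_right_mono\<close>)
      then show ?thesis unfolding sU sV sum_swap .
    qed
  qed
  have nn: "0 \<le> (\<Sum>i<n. gen_inv \<psi> (W i))" for \<psi> W by (simp add: sum_nonneg gen_inv_nonneg)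
  show "measure M {\<omega>\<in>space M. Min ((\<lambda>i. X i \<omega>) ` {..<n}) > x}
           \<le> measure N {\<omega>\<in>space N. Min ((\<lambda>i. Y i \<omega>) ` {..<n}) > x}"
    unfolding SX SY using logc
  proof (elim disjE)
    assume lc1: "log_convex_on {0..} \<psi>1"
    have "psi_ext \<psi>1 (\<Sum>i<n. gen_inv \<psi>1 (U i)) \<le> psi_ext \<psi>1 (\<Sum>i<n. gen_inv \<psi>1 (V i))"
      by (rule psi_ext_anti[OF gen1 nn KEY[OF gen1 lc1]])
    also have "\<dots> \<le> psi_ext \<psi>2 (\<Sum>i<n. gen_inv \<psi>2 (V i))"
      by (rule SA[OF gen1 gen2 sup]) (use rng in auto)
    finally show "psi_ext \<psi>1 (\<Sum>i<n. gen_inv \<psi>1 (U i)) \<le> psi_ext \<psi>2 (\<Sum>i<n. gen_inv \<psi>2 (V i))" .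
  next
    assume lc2: "log_convex_on {0..} \<psi>2"
    have "psi_ext \<psi>1 (\<Sum>i<n. gen_inv \<psi>1 (U i)) \<le> psi_ext \<psi>2 (\<Sum>i<n. gen_inv \<psi>2 (U i))"
      by (rule SA[OF gen1 gen2 sup]) (use rng in auto)
    also have "\<dots> \<le> psi_ext \<psi>2 (\<Sum>i<n. gen_inv \<psi>2 (V i))"
      by (rule psi_ext_anti[OF gen2 nn KEY[OF gen2 lc2]])
    finally show "psi_ext \<psi>1 (\<Sum>i<n. gen_inv \<psi>1 (U i)) \<le> psi_ext \<psi>2 (\<Sum>i<n. gen_inv \<psi>2 (V i))" .
  qed
qed

end
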